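(* Let $G=(V,E)$ be a finite simple connected graph, and let $\varphi$ be a failure pattern having at least one correct node, and set $R(\varphi)=\min_{v\in V}\mathrm{ecc}(v,\varphi)$. Then no algorithm (oblivious or not), even when the failure pattern $\varphi$ is known to all nodes in advance, solves binary consensus (inputs in $\{0,1\}$) in $G$ under failure pattern $\varphi$ in fewer than $R(\varphi)$ rounds. Consequently, under the $t$-resilient model consensus in $G$ requires at least $\max_{\varphi\in\Phi^{(t)}_{\mathrm{all}}}\min_{v\in V}\mathrm{ecc}(v,\varphi)$ rounds.
   Context: $N(v)$ is the neighbourhood of $v$. Synchronous rounds; each node sends a message to every neighbour in each round, receives its neighbours' messages, and computes; a node's state can only depend on information received along the message transmissions that occur. Failure patterns. A failure pattern is a set $\varphi=\{(v,F_v,f_v): v\in F\}$ with $F\subseteq V$, integers $f_v\ge1$ and nonempty $F_v\subseteq N(v)$: $v$ acts normally in rounds $<f_v$, in round $f_v$ its messages reach exactly $N(v)\setminus F_v$, afterwards it sends nothing. Nodes in $F$ are faulty, others correct. $\Phi^{(t)}_{\mathrm{all}}$ is the set of failure patterns with $|F|\le t$. Causal paths and eccentricity. A causal path w.r.t. $\varphi$ from $v$ to $v'$ is $u_1=v,\dots,u_q=v'$ with $u_{i+1}\in N(u_i)$, $u_i$ not crashed during rounds $1,\dots,i-1$, and $u_{i+1}\notin F_{u_i}$ if $u_i$ crashes at round $i$; length $q-1$. $\mathrm{ecc}(v,\varphi)$ is the maximum over correct $v'$ of the minimum length of a causal path from $v$ to $v'$ ($\infty$ if some correct $v'$ has none).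 Consensus. Every correct node outputs a value; all correct nodes output the same value, and it equals the input of some node. *)

theory Defs
  imports Main "HOL-Library.Extended_Nat"
begin

definition simple_graph :: "'v set \<Rightarrow> ('v \<Rightarrow> 'v \<Rightarrow> bool) \<Rightarrow> bool" where
  "simple_graph V E \<longleftrightarrow> finite V \<and> (\<forall>u v. E u v \<longrightarrow> u \<in> V \<and> v \<in> V)
     \<and> (\<forall>u v. E u v \<longrightarrow> E v u) \<and> (\<forall>u. \<not> E u u)"

definition connected_graph :: "'v set \<Rightarrow> ('v \<Rightarrow> 'v \<Rightarrow> bool) \<Rightarrow> bool" where
  "connected_graph V E \<longleftrightarrow> V \<noteq> {} \<and> (\<forall>u\<in>V. \<forall>v\<in>V. E\<^sup>*\<^sup>* u v)"

definition nbhd :: "('v \<Rightarrow> 'v \<Rightarrow> bool) \<Rightarrow> 'v \<Rightarrow> 'v set" where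
  "nbhd E v = {u. E v u}"

text \<open>A failure pattern maps each faulty node v to Some (F_v, f_v) and each correct node to None.\<close>
type_synonym 'v failure_pattern = "'v \<Rightarrow> ('v set \<times> nat) option"

definition wf_pattern :: "'v set \<Rightarrow> ('v \<Rightarrow> 'v \<Rightarrow> bool) \<Rightarrow> 'v failure_pattern \<Rightarrow> bool" where
  "wf_pattern V E \<phi> \<longleftrightarrow> (\<forall>v. \<phi> v \<noteq> None \<longrightarrow> v \<in> V)
     \<and> (\<forall>v Fv f. \<phi> v = Some (Fv, f) \<longrightarrow> 1 \<le> f \<and> Fv \<noteq> {} \<and> Fv \<subseteq> nbhd E v)"

definition faulty :: "'v failure_pattern \<Rightarrow> 'v set" where
  "faulty \<phi> = {v. \<phi> v \<noteq> None}"

definition correct :: "'v set \<Rightarrow> 'v failure_pattern \<Rightarrow> 'v \<Rightarrow> bool" where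
  "correct V \<phi> v \<longleftrightarrow> v \<in> V \<and> \<phi> v = None"

definition Phi_all :: "'v set \<Rightarrow> ('v \<Rightarrow> 'v \<Rightarrow> bool) \<Rightarrow> nat \<Rightarrow> 'v failure_pattern set" where
  "Phi_all V E t = {\<phi>. wf_pattern V E \<phi> \<and> card (faulty \<phi>) \<le> t}"

definition delivered :: "('v \<Rightarrow> 'v \<Rightarrow> bool) \<Rightarrow> 'v failure_pattern \<Rightarrow> nat \<Rightarrow> 'v \<Rightarrow> 'v \<Rightarrow> bool" where
  "delivered E \<phi> r u w \<longleftrightarrow> E u w \<and>
     (case \<phi> u of None \<Rightarrow> True | Some (Fu, fu) \<Rightarrow> r < fu \<or> (r = fu \<and> w \<notin> Fu))"

definition crashed_before :: "'v failure_pattern \<Rightarrow> 'v \<Rightarrow> nat \<Rightarrow> bool" where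
  "crashed_before \<phi> u i \<longleftrightarrow> (case \<phi> u of None \<Rightarrow> False | Some (_, f) \<Rightarrow> f < i)"

text \<open>List us = [u_1,...,u_q]; the list index j corresponds to u_(j+1), round j+1.\<close>
definition causal_path :: "('v \<Rightarrow> 'v \<Rightarrow> bool) \<Rightarrow> 'v failure_pattern \<Rightarrow> 'v list \<Rightarrow> bool" where
  "causal_path E \<phi> us \<longleftrightarrow> us \<noteq> [] \<and>
     (\<forall>j. Suc j < length us \<longrightarrow>
        E (us ! j) (us ! Suc j) \<and>
        \<not> crashed_before \<phi> (us ! j) (Suc j) \<and>
        (\<forall>Fu. \<phi> (us ! j) = Some (Fu, Suc j) \<longrightarrow> us ! Suc j \<notin> Fu))"

definition dist_causal :: "('v \<Rightarrow> 'v \<Rightarrow> bool) \<Rightarrow> 'v failure_pattern \<Rightarrow> 'v \<Rightarrow> 'v \<Rightarrow> enat" where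
  "dist_causal E \<phi> v v' = (INF us \<in> {us. causal_path E \<phi> us \<and> hd us = v \<and> last us = v'}.
                               enat (length us - 1))"

definition ecc :: "'v set \<Rightarrow> ('v \<Rightarrow> 'v \<Rightarrow> bool) \<Rightarrow> 'v failure_pattern \<Rightarrow> 'v \<Rightarrow> enat" where
  "ecc V E \<phi> v = (SUP v' \<in> {v'. correct V \<phi> v'}. dist_causal E \<phi> v v')"

definition R_bound :: "'v set \<Rightarrow> ('v \<Rightarrow> 'v \<Rightarrow> bool) \<Rightarrow> 'v failure_pattern \<Rightarrow> enat" where
  "R_bound V E \<phi> = (INF v \<in> V. ecc V E \<phi> v)"

text \<open>A node knows its identity
  (and, since the algorithm is arbitrary, the graph and the failure pattern may be hard-wired).\<close>
record ('v, 's, 'm) algorithm =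
  alg_init :: "'v \<Rightarrow> bool \<Rightarrow> 's"
  alg_msg :: "nat \<Rightarrow> 'v \<Rightarrow> 'v \<Rightarrow> 's \<Rightarrow> 'm"
  alg_trans :: "nat \<Rightarrow> 'v \<Rightarrow> 's \<Rightarrow> ('v \<Rightarrow> 'm option) \<Rightarrow> 's"
  alg_out :: "'v \<Rightarrow> 's \<Rightarrow> bool"

fun run :: "('v \<Rightarrow> 'v \<Rightarrow> bool) \<Rightarrow> ('v, 's, 'm) algorithm \<Rightarrow> 'v failure_pattern
             \<Rightarrow> ('v \<Rightarrow> bool) \<Rightarrow> nat \<Rightarrow> 'v \<Rightarrow> 's" where
  "run E A \<phi> x 0 v = alg_init A v (x v)"
| "run E A \<phi> x (Suc r) v =
     alg_trans A (Suc r) v (run E A \<phi> x r v)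
       (\<lambda>u. if delivered E \<phi> (Suc r) u v then Some (alg_msg A (Suc r) u v (run E A \<phi> x r u))
            else None)"

definition solves_consensus_in :: "'v set \<Rightarrow> ('v \<Rightarrow> 'v \<Rightarrow> bool) \<Rightarrow> ('v, 's, 'm) algorithm
     \<Rightarrow> 'v failure_pattern \<Rightarrow> nat \<Rightarrow> bool" where
  "solves_consensus_in V E A \<phi> k \<longleftrightarrow> (\<forall>x :: 'v \<Rightarrow> bool.
      (\<forall>v w. correct V \<phi> v \<longrightarrow> correct V \<phi> w \<longrightarrow>
          alg_out A v (run E A \<phi> x k v) = alg_out A w (run E A \<phi> x k w)) \<and>
      (\<forall>v. correct V \<phi> v \<longrightarrow> (\<exists>u\<in>V. alg_out A v (run E A \<phi> x k v) = x u)))"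

end

theory Submission
  imports Defs
begin

definition reach :: "('v \<Rightarrow> 'v \<Rightarrow> bool) \<Rightarrow> 'v failure_pattern \<Rightarrow> 'v \<Rightarrow> 'v \<Rightarrow> nat \<Rightarrow> bool" where
  "reach E \<phi> u w r \<longleftrightarrow> (\<exists>us. causal_path E \<phi> us \<and> hd us = u \<and> last us = w \<and> length us - 1 \<le> r)"

lemma causal_extend:
  assumes cp: "causal_path E \<phi> us" and l: "last us = u" and len: "length us - 1 \<le> r"
    and d: "delivered E \<phi> (Suc r) u w"
  shows "causal_path E \<phi> (us @ [w])"
proof -
  have ne: "us \<noteq> []" using cp by (simp add: causal_path_def)
  show ?thesis unfolding causal_path_def
  proof (rule conjI)
    show "us @ [w] \<noteq> []" by simp
  next
    show "\<forall>j. Suc j < length (us @ [w]) \<longrightarrow>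
        E ((us @ [w]) ! j) ((us @ [w]) ! Suc j) \<and>
        \<not> crashed_before \<phi> ((us @ [w]) ! j) (Suc j) \<and>
        (\<forall>Fu. \<phi> ((us @ [w]) ! j) = Some (Fu, Suc j) \<longrightarrow> (us @ [w]) ! Suc j \<notin> Fu)"
    proof (intro allI impI)
    fix j assume j: "Suc j < length (us @ [w])"
    show "E ((us @ [w]) ! j) ((us @ [w]) ! Suc j) \<and>
        \<not> crashed_before \<phi> ((us @ [w]) ! j) (Suc j) \<and>
        (\<forall>Fu. \<phi> ((us @ [w]) ! j) = Some (Fu, Suc j) \<longrightarrow> (us @ [w]) ! Suc j \<notin> Fu)"
    proof (cases "Suc j < length us")
      case True
      then show ?thesis using cp by (simp add: causal_path_def nth_append)
    next
      case False
      then have jj: "j = length us - 1" using j by simp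
      have a: "(us @ [w]) ! j = u" using ne l jj by (simp add: nth_append last_conv_nth)
      have b: "(us @ [w]) ! Suc j = w" using ne jj by (simp add: nth_append)
      have jr: "j \<le> r" using jj len by simp
      show ?thesis unfolding a b using d jr
        by (auto simp: delivered_def crashed_before_def split: option.splits)
    qed
    qed
  qed
qed

lemma reach_mono: "reach E \<phi> u w r \<Longrightarrow> reach E \<phi> u w (Suc r)"
  unfolding reach_def by fastforce

lemma reach_step:
  assumes "reach E \<phi> u' u r" "delivered E \<phi> (Suc r) u w"
  shows "reach E \<phi> u' w (Suc r)"
proof -
  obtain us where us: "causal_path E \<phi> us" "hd us = u'" "last us = u" "length us - 1 \<le> r"
    using assms(1) unfolding reach_def by blast
  have ne: "us \<noteq> []" using us(1) by (simp add: causal_path_def)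
  have "causal_path E \<phi> (us @ [w])" by (rule causal_extend[OF us(1) us(3) us(4) assms(2)])
  then show ?thesis unfolding reach_def using us ne
    by (intro exI[of _ "us @ [w]"]) auto
qed

lemma run_dep:
  "(\<And>u. reach E \<phi> u w r \<Longrightarrow> x u = y u) \<Longrightarrow> run E A \<phi> x r w = run E A \<phi> y r w"
proof (induction r arbitrary: w)
  case 0
  have "reach E \<phi> w w 0" unfolding reach_def
    by (intro exI[of _ "[w]"]) (simp add: causal_path_def)
  then show ?case using 0 by simp
next
  case (Suc r)
  have h1: "run E A \<phi> x r w = run E A \<phi> y r w"
    by (rule Suc.IH, rule Suc.prems, erule reach_mono)
  have h2: "run E A \<phi> x r u = run E A \<phi> y r u" if "delivered E \<phi> (Suc r) u w" for u
    by (rule Suc.IH, rule Suc.prems, erule reach_step, rule that)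
  show ?case using h1 h2 by (simp cong: if_cong)
qed

lemma part1:
  assumes fin: "finite V"
    and cor: "\<exists>v. correct V \<phi> v" and lt: "enat k < R_bound V E \<phi>"
  shows "\<not> solves_consensus_in V E A \<phi> k"
proof
  assume sol: "solves_consensus_in V E A \<phi> k"
  define out where "out x w = alg_out A w (run E A \<phi> x k w)" for x w
  have agr: "\<And>x v w. correct V \<phi> v \<Longrightarrow> correct V \<phi> w \<Longrightarrow> out x v = out x w"
    using sol unfolding solves_consensus_in_def out_def by blast
  have val: "\<And>x v. correct V \<phi> v \<Longrightarrow> \<exists>u\<in>V. out x v = x u"
    using sol unfolding solves_consensus_in_def out_def by blast
  have sep: "\<exists>v'. correct V \<phi> v' \<and> \<not> reach E \<phi> v v' k" if "v \<in> V" for v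
  proof -
    have "R_bound V E \<phi> \<le> ecc V E \<phi> v" unfolding R_bound_def using that by (rule INF_lower)
    then have "enat k < ecc V E \<phi> v" using lt by simp
    then obtain v' where v': "correct V \<phi> v'" "enat k < dist_causal E \<phi> v v'"
      unfolding ecc_def by (auto simp: less_SUP_iff)
    have "\<not> reach E \<phi> v v' k"
    proof
      assume "reach E \<phi> v v' k"
      then obtain us where us: "causal_path E \<phi> us" "hd us = v" "last us = v'" "length us - 1 \<le> k"
        unfolding reach_def by blast
      have "dist_causal E \<phi> v v' \<le> enat (length us - 1)"
        unfolding dist_causal_def using us by (intro INF_lower) auto
      moreover have "enat (length us - 1) \<le> enat k" using us(4) by simp
      ultimately show False using v'(2) using order_less_le_trans by fastforce
    qed
    then show ?thesis using v' by blast
  qed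
  have P: "\<forall>w. correct V \<phi> w \<longrightarrow> out (\<lambda>u. u \<in> T) w = False" if "T \<subseteq> V" for T
  proof -
    have "finite T" using fin that finite_subset by blast
    then show ?thesis using that
    proof (induction T rule: finite_induct)
      case empty
      show ?case
      proof (intro allI impI)
        fix w assume "correct V \<phi> w"
        then obtain u where "out (\<lambda>u. u \<in> {}) w = (u \<in> {})" using val[of w "\<lambda>u. u \<in> {}"] by blast
        then show "out (\<lambda>u. u \<in> {}) w = False" by simp
      qed
    next
      case (insert v T)
      have vV: "v \<in> V" using insert.prems by simp
      obtain v' where v': "correct V \<phi> v'" "\<not> reach E \<phi> v v' k" using sep[OF vV] by blast
      have IH: "out (\<lambda>u. u \<in> T) v' = False" using insert.IH insert.prems v'(1) by simp
      have "out (\<lambda>u. u \<in> insert v T) v' = out (\<lambda>u. u \<in> T) v'"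
        unfolding out_def
        by (rule arg_cong[where f="alg_out A v'"], rule run_dep) (use v'(2) in auto)
      then have "out (\<lambda>u. u \<in> insert v T) v' = False" using IH by simp
      then show ?case using agr[of v' _ "\<lambda>u. u \<in> insert v T"] v'(1) by metis
    qed
  qed
  obtain w where w: "correct V \<phi> w" using cor by blast
  have "out (\<lambda>u. u \<in> V) w = False" using P w by blast
  moreover obtain u where "u \<in> V" "out (\<lambda>u. u \<in> V) w = (u \<in> V)" using val[OF w, of "\<lambda>u. u \<in> V"] by blast
  ultimately show False by simp
qed

theorem mainTheorem7:
  fixes V :: "'v set" and E :: "'v \<Rightarrow> 'v \<Rightarrow> bool"
  assumes "simple_graph V E" and "connected_graph V E"
  shows "(\<forall>(\<phi> :: 'v failure_pattern) (A :: ('v, 's, 'm) algorithm) (k :: nat).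
            wf_pattern V E \<phi> \<longrightarrow> (\<exists>v. correct V \<phi> v) \<longrightarrow> enat k < R_bound V E \<phi> \<longrightarrow>
            \<not> solves_consensus_in V E A \<phi> k)
       \<and> (\<forall>(t :: nat) (A :: ('v, 's, 'm) algorithm) (k :: nat).
            (\<forall>\<phi> \<in> Phi_all V E t. solves_consensus_in V E A \<phi> k) \<longrightarrow>
            (SUP \<phi> \<in> Phi_all V E t. R_bound V E \<phi>) \<le> enat k)"
proof -
  have fin: "finite V" using assms(1) by (simp add: simple_graph_def)
  have ne: "V \<noteq> {}" using assms(2) by (simp add: connected_graph_def)
  show ?thesis
  proof (intro conjI allI impI)
    fix \<phi> :: "'v failure_pattern" and A :: "('v, 's, 'm) algorithm" and k
    assume "\<exists>v. correct V \<phi> v" "enat k < R_bound V E \<phi>"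
    then show "\<not> solves_consensus_in V E A \<phi> k" using part1 fin by blast
  next
    fix t and A :: "('v, 's, 'm) algorithm" and k
    assume all: "\<forall>\<phi> \<in> Phi_all V E t. solves_consensus_in V E A \<phi> k"
    show "(SUP \<phi> \<in> Phi_all V E t. R_bound V E \<phi>) \<le> enat k"
    proof (rule SUP_least)
      fix \<phi> assume ph: "\<phi> \<in> Phi_all V E t"
      show "R_bound V E \<phi> \<le> enat k"
      proof (cases "\<exists>v. correct V \<phi> v")
        case True
        have "\<not> (enat k < R_bound V E \<phi>)" using part1[OF fin True, of k E A] all ph by blast
        then show ?thesis by (simp add: not_less)
      next
        case False
        obtain v where v: "v \<in> V" using ne by blast
        have "ecc V E \<phi> v = 0" proof -
          have e: "{v'. correct V \<phi> v'} = {}" using False by auto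
          show ?thesis unfolding ecc_def e by (simp add: bot_enat_def)
        qed
        moreover have "R_bound V E \<phi> \<le> ecc V E \<phi> v" unfolding R_bound_def using v by (rule INF_lower)
        ultimately have "R_bound V E \<phi> \<le> 0" by simp
        then show ?thesis by simp
      qed
    qed
  qed
qed

end
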